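(* Let $X$ be a Banach space and $T\in L(X)$ be such that (1) there exists $M\in L(X)$ with $[T,[T,M]]=0$ such that for every cyclic vector $u$ of $T$ and every $v\in X$ there exist $B,C\in\mathcal{C}(T)$ with $C[T,M]\neq 0$ and $Cv=Bu$. Then $T$ is not supercyclic. If additionally (2) there is $R\in\mathcal{C}(T)$ with dense range such that $R(X)\subseteq Y$ for some Banach space $Y\in\mathcal{Y}$ embedded into $X$, then $T$ is not weakly supercyclic.
   Context: Scalars are $\mathbb{K}\in\{\mathbb{R},\mathbb{C}\}$. $L(X)$ denotes bounded linear operators on $X$; $[T,S]=TS-ST$; $\mathcal{C}(T)=\{S\in L(X):[T,S]=0\}$. A vector $u$ is cyclic for $T$ if the linear span of $\{T^nu:n\in\mathbb{Z}_+\}$ is dense in $X$. $T$ is supercyclic (resp. weakly supercyclic) if for some $x\in X$ the set $\{zT^nx:z\in\mathbb{K},n\in\mathbb{Z}_+\}$ is norm dense (resp. weakly dense) in $X$. A Banach space $Y$ embedded into $X$ is a linear subspace of $X$ with its own norm making it a Banach space and whose topology is stronger than the one inherited from $X$. $\mathcal{Y}$ is the class of Banach spaces $X$ such that for every sequence $(x_n)_{n\in\mathbb{Z}_+}$ in $X$ with $n=O(\|x_n\|)$ as $n\to\infty$, the set $\{x_n:n\in\mathbb{Z}_+\}$ is weakly closed. *)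

theory Defs
  imports "HOL-Analysis.Analysis"
begin

text \<open>The scalar field K is modelled by a type 'k of class real_normed_field acting on
  the real Banach space 'a through sc; the action extends scaleR and is isometric,
  so 'a is a Banach space over K.\<close>

definition scalar_action :: "('k::real_normed_field \<Rightarrow> 'a::real_normed_vector \<Rightarrow> 'a) \<Rightarrow> bool" where
  "scalar_action sc \<longleftrightarrow>
     (\<forall>a b x. sc (a * b) x = sc a (sc b x)) \<and> (\<forall>x. sc 1 x = x) \<and>
     (\<forall>a b x. sc (a + b) x = sc a x + sc b x) \<and> (\<forall>a x y. sc a (x + y) = sc a x + sc a y) \<and>
     (\<forall>a x. norm (sc a x) = norm a * norm x) \<and> (\<forall>r x. sc (of_real r) x = scaleR r x)"

definition real_or_complex :: "'k::real_normed_field itself \<Rightarrow> bool" where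
  "real_or_complex _ \<longleftrightarrow> (\<forall>k::'k. k \<in> \<real>) \<or>
     (\<exists>i::'k. i * i = -1 \<and> (\<forall>k::'k. \<exists>a b. k = of_real a + of_real b * i))"

definition opL :: "('k::real_normed_field \<Rightarrow> 'a::real_normed_vector \<Rightarrow> 'a) \<Rightarrow> ('a \<Rightarrow> 'a) set" where
  "opL sc = {T. bounded_linear T \<and> (\<forall>a x. T (sc a x) = sc a (T x))}"

definition commutator :: "('a::ab_group_add \<Rightarrow> 'a) \<Rightarrow> ('a \<Rightarrow> 'a) \<Rightarrow> 'a \<Rightarrow> 'a" where
  "commutator T S = (\<lambda>x. T (S x) - S (T x))"

definition commutant :: "('k::real_normed_field \<Rightarrow> 'a::real_normed_vector \<Rightarrow> 'a) \<Rightarrow> ('a \<Rightarrow> 'a) \<Rightarrow> ('a \<Rightarrow> 'a) set" where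
  "commutant sc T = {S \<in> opL sc. commutator T S = (\<lambda>_. 0)}"

definition kspan :: "('k \<Rightarrow> 'a::comm_monoid_add \<Rightarrow> 'a) \<Rightarrow> 'a set \<Rightarrow> 'a set" where
  "kspan sc A = {x. \<exists>F c. finite F \<and> F \<subseteq> A \<and> x = (\<Sum>y\<in>F. sc (c y) y)}"

definition cyclic_vector :: "('k \<Rightarrow> 'a::real_normed_vector \<Rightarrow> 'a) \<Rightarrow> ('a \<Rightarrow> 'a) \<Rightarrow> 'a \<Rightarrow> bool" where
  "cyclic_vector sc T u \<longleftrightarrow> closure (kspan sc (range (\<lambda>n. (T ^^ n) u))) = UNIV"

definition supercyclic :: "('k \<Rightarrow> 'a::real_normed_vector \<Rightarrow> 'a) \<Rightarrow> ('a \<Rightarrow> 'a) \<Rightarrow> bool" where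
  "supercyclic sc T \<longleftrightarrow> (\<exists>x. closure {sc z ((T ^^ n) x) | z n. True} = UNIV)"

text \<open>Weak topology, generated by the continuous linear functionals (real ones; for a
  complex space these generate the same topology as the complex dual).\<close>
definition weakly_dense :: "'a::real_normed_vector set \<Rightarrow> bool" where
  "weakly_dense A \<longleftrightarrow> (\<forall>x. \<forall>F :: ('a \<Rightarrow> real) set. finite F \<longrightarrow> (\<forall>f\<in>F. bounded_linear f) \<longrightarrow>
      (\<forall>e>0. \<exists>y\<in>A. \<forall>f\<in>F. \<bar>f y - f x\<bar> < e))"

definition weakly_supercyclic :: "('k \<Rightarrow> 'a::real_normed_vector \<Rightarrow> 'a) \<Rightarrow> ('a \<Rightarrow> 'a) \<Rightarrow> bool" where
  "weakly_supercyclic sc T \<longleftrightarrow> (\<exists>x. weakly_dense {sc z ((T ^^ n) x) | z n. True})"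

text \<open>A Banach space Y embedded into X: a K-linear subspace Y of X with its own norm nY,
  complete, whose topology is stronger than the one inherited from X.\<close>
definition embedded_banach :: "('k::real_normed_field \<Rightarrow> 'a::real_normed_vector \<Rightarrow> 'a) \<Rightarrow> 'a set \<Rightarrow> ('a \<Rightarrow> real) \<Rightarrow> bool" where
  "embedded_banach sc Y nY \<longleftrightarrow>
     0 \<in> Y \<and> (\<forall>x\<in>Y. \<forall>y\<in>Y. x + y \<in> Y) \<and> (\<forall>a. \<forall>y\<in>Y. sc a y \<in> Y) \<and>
     (\<forall>y\<in>Y. 0 \<le> nY y \<and> (nY y = 0 \<longleftrightarrow> y = 0)) \<and>
     (\<forall>x\<in>Y. \<forall>y\<in>Y. nY (x + y) \<le> nY x + nY y) \<and>
     (\<forall>a. \<forall>y\<in>Y. nY (sc a y) = norm a * nY y) \<and>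
     (\<forall>s. (\<forall>n. s n \<in> Y) \<longrightarrow> (\<forall>e>0. \<exists>N. \<forall>m\<ge>N. \<forall>n\<ge>N. nY (s m - s n) < e) \<longrightarrow>
          (\<exists>l\<in>Y. (\<lambda>n. nY (s n - l)) \<longlonglongrightarrow> 0)) \<and>
     (\<exists>c. \<forall>y\<in>Y. norm y \<le> c * nY y)"

definition Y_functional :: "'a::real_vector set \<Rightarrow> ('a \<Rightarrow> real) \<Rightarrow> ('a \<Rightarrow> real) \<Rightarrow> bool" where
  "Y_functional Y nY f \<longleftrightarrow> (\<forall>x\<in>Y. \<forall>y\<in>Y. f (x + y) = f x + f y) \<and>
     (\<forall>r. \<forall>y\<in>Y. f (scaleR r y) = r * f y) \<and> (\<exists>c. \<forall>y\<in>Y. \<bar>f y\<bar> \<le> c * nY y)"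

definition Y_weakly_closed :: "'a::real_vector set \<Rightarrow> ('a \<Rightarrow> real) \<Rightarrow> 'a set \<Rightarrow> bool" where
  "Y_weakly_closed Y nY S \<longleftrightarrow> (\<forall>x\<in>Y - S. \<exists>F. finite F \<and> (\<forall>f\<in>F. Y_functional Y nY f) \<and>
      (\<exists>e>0. \<forall>y\<in>S. \<exists>f\<in>F. e \<le> \<bar>f y - f x\<bar>))"

definition in_class_Y :: "'a::real_vector set \<Rightarrow> ('a \<Rightarrow> real) \<Rightarrow> bool" where
  "in_class_Y Y nY \<longleftrightarrow> (\<forall>x :: nat \<Rightarrow> 'a. (\<forall>n. x n \<in> Y) \<longrightarrow>
      (\<exists>C N. \<forall>n\<ge>N. real n \<le> C * nY (x n)) \<longrightarrow> Y_weakly_closed Y nY (range x))"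

end

theory Submission imports Defs begin


definition goodG :: "('a::real_normed_vector \<times> real) set \<Rightarrow> real \<Rightarrow> bool" where
 "goodG G c \<longleftrightarrow> (\<forall>x a b. (x,a)\<in>G \<longrightarrow> (x,b)\<in>G \<longrightarrow> a = b) \<and>
    (\<forall>x a y b. (x,a)\<in>G \<longrightarrow> (y,b)\<in>G \<longrightarrow> (x+y,a+b)\<in>G) \<and>
    (\<forall>x a r. (x,a)\<in>G \<longrightarrow> (r *\<^sub>R x, r*a)\<in>G) \<and>
    (\<forall>x a. (x,a)\<in>G \<longrightarrow> a \<le> c * norm x) \<and> G \<noteq> {}"

lemma goodG_zero: "goodG G c \<Longrightarrow> (0,0) \<in> G"
proof -
  assume g: "goodG G c"
  then obtain x a where xa: "(x,a)\<in>G" unfolding goodG_def by auto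
  have "(0 *\<^sub>R x, 0*a)\<in>G" using g xa unfolding goodG_def by blast
  thus ?thesis by simp
qed

lemma goodG_ext:
  assumes g: "goodG G c" and c: "c \<ge> 0" and x0: "\<forall>a. (x0,a) \<notin> G"
  shows "\<exists>G'. goodG G' c \<and> G \<subseteq> G' \<and> G' \<noteq> G"
proof -
  have sv: "\<And>x a b. (x,a)\<in>G \<Longrightarrow> (x,b)\<in>G \<Longrightarrow> a = b" and ad: "\<And>x a y b. (x,a)\<in>G \<Longrightarrow> (y,b)\<in>G \<Longrightarrow> (x+y,a+b)\<in>G"
   and sm: "\<And>x a r. (x,a)\<in>G \<Longrightarrow> (r *\<^sub>R x, r*a)\<in>G" and dom: "\<And>x a. (x,a)\<in>G \<Longrightarrow> a \<le> c * norm x"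
    using g unfolding goodG_def by blast+
  have z: "(0,0)\<in>G" using goodG_zero[OF g] .
  define Q where "Q = {a - c * norm (h - x0) | h a. (h,a)\<in>G}"
  define \<xi> where "\<xi> = Sup Q"
  have up: "q \<le> c * norm (k + x0) - b" if qQ: "q \<in> Q" and kb: "(k,b)\<in>G" for q k b
  proof -
    obtain h a where q: "q = a - c * norm (h - x0)" "(h,a)\<in>G" using qQ Q_def by blast
    have 1: "a + b \<le> c * norm (h + k)" using dom[OF ad[OF q(2) kb]] .
    have "norm (h + k) = norm ((h - x0) + (k + x0))" by (simp add: algebra_simps)
    also have "\<dots> \<le> norm (h - x0) + norm (k + x0)" by (rule norm_triangle_ineq)
    finally have "c * norm (h + k) \<le> c * (norm (h - x0) + norm (k + x0))" using c by (rule mult_left_mono)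
    with 1 q(1) show ?thesis by (simp add: algebra_simps)
  qed
  have Qne: "Q \<noteq> {}" using z Q_def by blast
  have bdd: "bdd_above Q" using up[OF _ z] by (intro bdd_aboveI[of _ "c * norm x0"]) simp
  have xi_le: "\<xi> \<le> c * norm (k + x0) - b" if "(k,b)\<in>G" for k b
    unfolding \<xi>_def using up[OF _ that] Qne by (intro cSup_least) auto
  have xi_ge: "a - c * norm (h - x0) \<le> \<xi>" if "(h,a)\<in>G" for h a
    unfolding \<xi>_def using bdd that Q_def by (intro cSup_upper) auto
  define G' where "G' = {(h + t *\<^sub>R x0, a + t*\<xi>) | h a t. (h,a)\<in>G}"
  have inG': "(h + t *\<^sub>R x0, a + t*\<xi>) \<in> G'" if "(h,a)\<in>G" for h a t
    using that G'_def by blast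
  have sub: "G \<subseteq> G'"
  proof
    fix p assume "p \<in> G" then show "p \<in> G'" using inG'[of "fst p" "snd p" 0] by auto
  qed
  have x0in: "(x0, \<xi>) \<in> G'" using inG'[OF z, of 1] by simp
  have "goodG G' c"
    unfolding goodG_def
  proof (intro conjI allI impI)
    fix x a b assume A: "(x,a)\<in>G'" "(x,b)\<in>G'"
    then obtain h1 a1 t1 h2 a2 t2 where e: "x = h1 + t1 *\<^sub>R x0" "a = a1 + t1*\<xi>" "(h1,a1)\<in>G"
        "x = h2 + t2 *\<^sub>R x0" "b = a2 + t2*\<xi>" "(h2,a2)\<in>G" unfolding G'_def by blast
    have t: "t1 = t2"
    proof (rule ccontr)
      assume ne: "t1 \<noteq> t2"
      have "(h1 + (-1) *\<^sub>R h2, a1 + (-1)*a2) \<in> G" using ad[OF e(3) sm[OF e(6)]] .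
      hence "((1/(t2-t1)) *\<^sub>R (h1 + (-1) *\<^sub>R h2), (1/(t2-t1)) * (a1 + (-1)*a2)) \<in> G" by (rule sm)
      hence "((1/(t2-t1)) *\<^sub>R (h1 - h2), (1/(t2-t1)) * (a1 - a2)) \<in> G" by simp
      moreover have "(1/(t2-t1)) *\<^sub>R (h1 - h2) = x0"
      proof -
        have "h1 - h2 = (t2 - t1) *\<^sub>R x0" using e(1) e(4) by (simp add: algebra_simps)
        thus ?thesis using ne by simp
      qed
      ultimately show False using x0 by metis
    qed
    hence "h1 = h2" using e by simp
    hence "a1 = a2" using sv e by blast
    thus "a = b" using e t by simp
  next
    fix x a y b assume A: "(x,a)\<in>G'" "(y,b)\<in>G'"
    then obtain h1 a1 t1 h2 a2 t2 where e: "x = h1 + t1 *\<^sub>R x0" "a = a1 + t1*\<xi>" "(h1,a1)\<in>G"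
        "y = h2 + t2 *\<^sub>R x0" "b = a2 + t2*\<xi>" "(h2,a2)\<in>G" unfolding G'_def by blast
    have "(h1+h2 + (t1+t2) *\<^sub>R x0, a1+a2 + (t1+t2)*\<xi>) \<in> G'" using inG'[OF ad[OF e(3) e(6)]] .
    thus "(x+y,a+b)\<in>G'" using e by (simp add: algebra_simps)
  next
    fix x a r assume A: "(x,a)\<in>G'"
    then obtain h1 a1 t1 where e: "x = h1 + t1 *\<^sub>R x0" "a = a1 + t1*\<xi>" "(h1,a1)\<in>G"
      unfolding G'_def by blast
    have "(r *\<^sub>R h1 + (r*t1) *\<^sub>R x0, r*a1 + (r*t1)*\<xi>) \<in> G'" using inG'[OF sm[OF e(3)]] .
    thus "(r *\<^sub>R x, r*a)\<in>G'" using e by (simp add: algebra_simps)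
  next
    fix x a assume A: "(x,a)\<in>G'"
    then obtain h a1 t where e: "x = h + t *\<^sub>R x0" "a = a1 + t*\<xi>" "(h,a1)\<in>G"
      unfolding G'_def by blast
    consider "t = 0" | "t > 0" | "t < 0" by linarith
    then show "a \<le> c * norm x"
    proof cases
      case 1 thus ?thesis using e dom by simp
    next
      case 2
      have "((1/t) *\<^sub>R h, (1/t)*a1) \<in> G" using sm[OF e(3)] .
      from xi_le[OF this] have "t*\<xi> \<le> t*(c * norm ((1/t) *\<^sub>R h + x0) - (1/t)*a1)"
        using 2 by (simp add: mult_left_mono)
      also have "\<dots> = c * (t * norm ((1/t) *\<^sub>R h + x0)) - a1" using 2 by (simp add: algebra_simps)
      also have "t * norm ((1/t) *\<^sub>R h + x0) = norm (t *\<^sub>R ((1/t) *\<^sub>R h + x0))" using 2 by simp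
      also have "t *\<^sub>R ((1/t) *\<^sub>R h + x0) = x" using 2 e by (simp add: algebra_simps)
      finally show ?thesis using e by simp
    next
      case 3
      define s where "s = -t"
      have s: "s > 0" using 3 s_def by simp
      have "((1/s) *\<^sub>R h, (1/s)*a1) \<in> G" using sm[OF e(3)] .
      from xi_ge[OF this] have "s*((1/s)*a1 - c * norm ((1/s) *\<^sub>R h - x0)) \<le> s*\<xi>"
        using s by (simp add: mult_left_mono)
      moreover have "s*((1/s)*a1 - c * norm ((1/s) *\<^sub>R h - x0)) = a1 - c * (s * norm ((1/s) *\<^sub>R h - x0))"
        using s by (simp add: algebra_simps)
      moreover have "s * norm ((1/s) *\<^sub>R h - x0) = norm (s *\<^sub>R ((1/s) *\<^sub>R h - x0))" using s by simp
      moreover have "s *\<^sub>R ((1/s) *\<^sub>R h - x0) = x" using s e s_def by (simp add: algebra_simps)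
      ultimately have "a1 - c * norm x \<le> s * \<xi>" by metis
      thus ?thesis using e s_def by (simp add: algebra_simps)
    qed
  next
    show "G' \<noteq> {}" using x0in by blast
  qed
  moreover have "G' \<noteq> G" using x0in x0 by blast
  ultimately show ?thesis using sub by blast
qed

lemma hahn_banach_graph:
  fixes G0 :: "('a::real_normed_vector \<times> real) set"
  assumes g: "goodG G0 c" and c: "c \<ge> 0"
  shows "\<exists>f. bounded_linear f \<and> (\<forall>x a. (x,a)\<in>G0 \<longrightarrow> f x = a)"
proof -
  define AA where "AA = {G. goodG G c \<and> G0 \<subseteq> G}"
  have "\<exists>M\<in>AA. \<forall>X\<in>AA. M \<subseteq> X \<longrightarrow> X = M"
  proof (rule subset_Zorn_nonempty)
    show "AA \<noteq> {}" using g AA_def by blast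
  next
    fix CC assume ne: "CC \<noteq> {}" and ch: "subset.chain AA CC"
    have CA: "CC \<subseteq> AA" and tot: "\<And>X Y. X\<in>CC \<Longrightarrow> Y\<in>CC \<Longrightarrow> X \<subseteq> Y \<or> Y \<subseteq> X"
      using ch unfolding subset_chain_def by blast+
    have gd: "\<And>X. X\<in>CC \<Longrightarrow> goodG X c" and sup0: "\<And>X. X\<in>CC \<Longrightarrow> G0 \<subseteq> X" using CA AA_def by blast+
    have two: "\<exists>Z\<in>CC. p \<in> Z \<and> q \<in> Z" if "p \<in> \<Union>CC" "q \<in> \<Union>CC" for p q
      using that tot by blast
    have "goodG (\<Union>CC) c" unfolding goodG_def
    proof (intro conjI allI impI)
      fix x a b assume "(x,a)\<in>\<Union>CC" "(x,b)\<in>\<Union>CC"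
      then obtain Z where "Z\<in>CC" "(x,a)\<in>Z" "(x,b)\<in>Z" using two by blast
      thus "a = b" using gd unfolding goodG_def by blast
    next
      fix x a y b assume "(x,a)\<in>\<Union>CC" "(y,b)\<in>\<Union>CC"
      then obtain Z where "Z\<in>CC" "(x,a)\<in>Z" "(y,b)\<in>Z" using two by blast
      thus "(x+y,a+b)\<in>\<Union>CC" using gd unfolding goodG_def by blast
    next
      fix x a r assume "(x,a)\<in>\<Union>CC"
      then obtain Z where "Z\<in>CC" "(x,a)\<in>Z" by blast
      thus "(r *\<^sub>R x, r*a)\<in>\<Union>CC" using gd unfolding goodG_def by blast
    next
      fix x a assume "(x,a)\<in>\<Union>CC"
      then obtain Z where "Z\<in>CC" "(x,a)\<in>Z" by blast
      thus "a \<le> c * norm x" using gd unfolding goodG_def by blast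
    next
      show "\<Union>CC \<noteq> {}" using ne gd unfolding goodG_def by blast
    qed
    moreover have "G0 \<subseteq> \<Union>CC" using ne sup0 by blast
    ultimately show "\<Union>CC \<in> AA" using AA_def by blast
  qed
  then obtain M where MA: "M \<in> AA" and mx0: "\<forall>X\<in>AA. M \<subseteq> X \<longrightarrow> X = M" by blast
  have M: "goodG M c" "G0 \<subseteq> M" using MA unfolding AA_def by auto
  have mx: "X = M" if "goodG X c" "G0 \<subseteq> X" "M \<subseteq> X" for X
    using mx0 that unfolding AA_def by blast
  have tot: "\<exists>a. (x,a)\<in>M" for x
  proof (rule ccontr)
    assume "\<not> ?thesis"
    then obtain G' where "goodG G' c" "M \<subseteq> G'" "G' \<noteq> M" using goodG_ext[OF M(1) c] by blast
    thus False using mx M(2) by blast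
  qed
  have sv: "\<And>x a b. (x,a)\<in>M \<Longrightarrow> (x,b)\<in>M \<Longrightarrow> a = b" and ad: "\<And>x a y b. (x,a)\<in>M \<Longrightarrow> (y,b)\<in>M \<Longrightarrow> (x+y,a+b)\<in>M"
   and sm: "\<And>x a r. (x,a)\<in>M \<Longrightarrow> (r *\<^sub>R x, r*a)\<in>M" and dom: "\<And>x a. (x,a)\<in>M \<Longrightarrow> a \<le> c * norm x"
    using M(1) unfolding goodG_def by blast+
  define f where "f x = (THE a. (x,a)\<in>M)" for x
  have fM: "(x, f x) \<in> M" for x unfolding f_def using tot sv by (metis theI)
  have fval: "(x,a)\<in>M \<Longrightarrow> f x = a" for x a using fM sv by blast
  have "bounded_linear f"
  proof (rule bounded_linear_intro[where K=c])
    fix x y show "f (x+y) = f x + f y" using fval[OF ad[OF fM fM]] .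
  next
    fix r x show "f (r *\<^sub>R x) = r *\<^sub>R f x" using fval[OF sm[OF fM]] by simp
  next
    fix x
    have "f x \<le> c * norm x" using dom[OF fM] .
    moreover have "- f x \<le> c * norm x" using dom[OF sm[OF fM[of x], of "-1"]] by simp
    ultimately show "norm (f x) \<le> norm x * c" by (simp add: mult.commute abs_le_iff)
  qed
  thus ?thesis using fval M(2) by blast
qed



lemma separate:
  fixes V :: "'a::real_normed_vector set"
  assumes cl: "closed V" and z: "0 \<in> V" and ad: "\<And>x y. x\<in>V \<Longrightarrow> y\<in>V \<Longrightarrow> x+y\<in>V"
    and sm: "\<And>r x. x\<in>V \<Longrightarrow> r *\<^sub>R x \<in> V" and y: "y \<notin> V"
  shows "\<exists>f::'a \<Rightarrow> real. bounded_linear f \<and> (\<forall>v\<in>V. f v = 0) \<and> f y = 1"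
proof -
  define d where "d = infdist y V"
  have d: "d > 0" unfolding d_def using infdist_pos_not_in_closed[OF cl _ y] z by blast
  define G0 where "G0 = {(v + t *\<^sub>R y, t) | v t. v\<in>V}"
  have "goodG G0 (1/d)" unfolding goodG_def
  proof (intro conjI allI impI)
    fix x a b assume "(x,a)\<in>G0" "(x,b)\<in>G0"
    then obtain v1 v2 where e: "x = v1 + a *\<^sub>R y" "v1\<in>V" "x = v2 + b *\<^sub>R y" "v2\<in>V" unfolding G0_def by blast
    show "a = b"
    proof (rule ccontr)
      assume ne: "a \<noteq> b"
      have "(a - b) *\<^sub>R y = v2 - v1" using e by (simp add: algebra_simps)
      moreover have "(1/(a-b)) *\<^sub>R ((a-b) *\<^sub>R y) = y" using ne by simp
      ultimately have "y = (1/(a-b)) *\<^sub>R (v2 + (-1) *\<^sub>R v1)" by simp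
      moreover have "(1/(a-b)) *\<^sub>R (v2 + (-1) *\<^sub>R v1) \<in> V" using e ad sm by blast
      ultimately show False using y by simp
    qed
  next
    fix x a x' b assume "(x,a)\<in>G0" "(x',b)\<in>G0"
    then obtain v1 v2 where e: "x = v1 + a *\<^sub>R y" "v1\<in>V" "x' = v2 + b *\<^sub>R y" "v2\<in>V" unfolding G0_def by blast
    have "x + x' = (v1 + v2) + (a+b) *\<^sub>R y" using e by (simp add: algebra_simps)
    thus "(x+x', a+b)\<in>G0" using e ad unfolding G0_def by blast
  next
    fix x a r assume "(x,a)\<in>G0"
    then obtain v1 where e: "x = v1 + a *\<^sub>R y" "v1\<in>V" unfolding G0_def by blast
    have "r *\<^sub>R x = r *\<^sub>R v1 + (r*a) *\<^sub>R y" using e by (simp add: algebra_simps)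
    thus "(r *\<^sub>R x, r*a)\<in>G0" using e sm unfolding G0_def by blast
  next
    fix x a assume "(x,a)\<in>G0"
    then obtain v1 where e: "x = v1 + a *\<^sub>R y" "v1\<in>V" unfolding G0_def by blast
    show "a \<le> 1/d * norm x"
    proof (cases "a > 0")
      case True
      have "- ((1/a) *\<^sub>R v1) \<in> V" using sm[OF e(2), of "-(1/a)"] by simp
      hence "d \<le> dist y (- ((1/a) *\<^sub>R v1))" unfolding d_def by (rule infdist_le)
      also have "dist y (- ((1/a) *\<^sub>R v1)) = norm (y + (1/a) *\<^sub>R v1)"
        by (simp add: dist_norm)
      also have "y + (1/a) *\<^sub>R v1 = (1/a) *\<^sub>R x"
        using True e(1) by (simp add: scaleR_add_right)
      also have "norm ((1/a) *\<^sub>R x) = norm x / a" using True by simp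
      finally have "d \<le> norm x / a" .
      hence "d * a \<le> norm x" using True by (simp add: pos_le_divide_eq)
      hence "a \<le> norm x / d" using d by (simp add: pos_le_divide_eq mult.commute)
      thus ?thesis by simp
    next
      case False
      have "0 \<le> 1/d * norm x" using d by simp
      thus ?thesis using False by linarith
    qed
  next
    show "G0 \<noteq> {}" using z unfolding G0_def by blast
  qed
  then obtain f where f: "bounded_linear f" "\<forall>x a. (x,a)\<in>G0 \<longrightarrow> f x = a"
    using hahn_banach_graph[of G0 "1/d"] d by auto
  have "\<forall>v\<in>V. f v = 0"
  proof
    fix v assume "v\<in>V"
    hence "(v + 0 *\<^sub>R y, 0) \<in> G0" unfolding G0_def by blast
    thus "f v = 0" using f(2) by simp
  qed
  moreover have "f y = 1"
  proof -
    have "(0 + 1 *\<^sub>R y, 1) \<in> G0" using z unfolding G0_def by blast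
    thus ?thesis using f(2) by simp
  qed
  ultimately show ?thesis using f(1) by (intro exI[of _ f]) simp
qed

lemma closure_sub:
  fixes S :: "'a::real_normed_vector set"
  assumes z: "0 \<in> S" and ad: "\<And>x y. x\<in>S \<Longrightarrow> y\<in>S \<Longrightarrow> x+y\<in>S"
    and sm: "\<And>r x. x\<in>S \<Longrightarrow> r *\<^sub>R x \<in> S"
  shows "0 \<in> closure S" "\<And>x y. x\<in>closure S \<Longrightarrow> y\<in>closure S \<Longrightarrow> x+y\<in>closure S"
    "\<And>r x. x\<in>closure S \<Longrightarrow> r *\<^sub>R x \<in> closure S"
proof -
  show "0 \<in> closure S" using z closure_subset by blast
next
  fix x y assume "x\<in>closure S" "y\<in>closure S"
  then obtain f g where "\<forall>n. f n \<in> S" "f \<longlonglongrightarrow> x" "\<forall>n. g n \<in> S" "g \<longlonglongrightarrow> y"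
    unfolding closure_sequential by blast
  thus "x+y\<in>closure S" unfolding closure_sequential
    by (intro exI[of _ "\<lambda>n. f n + g n"]) (auto intro: tendsto_add ad)
next
  fix r x assume "x\<in>closure S"
  then obtain f where "\<forall>n. f n \<in> S" "f \<longlonglongrightarrow> x"
    unfolding closure_sequential by blast
  thus "r *\<^sub>R x\<in>closure S" unfolding closure_sequential
    by (intro exI[of _ "\<lambda>n. r *\<^sub>R f n"]) (auto intro: tendsto_scaleR sm)
qed

lemma dense_weakly_dense:
  fixes A :: "'a::real_normed_vector set"
  assumes "closure A = UNIV"
  shows "weakly_dense A"
  unfolding weakly_dense_def
proof (intro allI impI)
  fix x :: 'a and F :: "('a \<Rightarrow> real) set" and e :: real
  assume fin: "finite F" and bl: "\<forall>f\<in>F. bounded_linear f" and e: "e > 0"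
  have "\<forall>f\<in>F. \<exists>K>0. \<forall>z. norm (f z) \<le> norm z * K" using bl bounded_linear.pos_bounded by blast
  then obtain K where K: "\<And>f. f\<in>F \<Longrightarrow> K f > 0 \<and> (\<forall>z. norm (f z) \<le> norm z * K f)" by metis
  define KK where "KK = (\<Sum>f\<in>F. K f) + 1"
  have KKpos: "KK > 0" unfolding KK_def using K by (smt (verit) sum_nonneg)
  have Kle: "K f \<le> KK" if "f\<in>F" for f
  proof -
    have "K f \<le> (\<Sum>f\<in>F. K f)" using member_le_sum[OF that _ fin, of K] K by (simp add: less_imp_le)
    thus ?thesis unfolding KK_def by simp
  qed
  have "x \<in> closure A" using assms by simp
  then obtain y where y: "y \<in> A" "dist y x < e / KK"
    unfolding closure_approachable using e KKpos by (meson divide_pos_pos)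
  have "\<bar>f y - f x\<bar> < e" if f: "f\<in>F" for f
  proof -
    have "\<bar>f y - f x\<bar> = norm (f (y - x))" using bl f by (simp add: linear_diff bounded_linear.linear)
    also have "\<dots> \<le> norm (y - x) * K f" using K[OF f] by blast
    also have "\<dots> \<le> norm (y - x) * KK" using Kle[OF f] by (simp add: mult_left_mono)
    also have "\<dots> < e" using y(2) KKpos by (simp add: dist_norm field_simps)
    finally show ?thesis .
  qed
  thus "\<exists>y\<in>A. \<forall>f\<in>F. \<bar>f y - f x\<bar> < e" using y(1) by blast
qed



context
  fixes sc :: "'k::real_normed_field \<Rightarrow> 'a::real_normed_vector \<Rightarrow> 'a"
  assumes sc: "scalar_action sc"
begin

lemma sc_mult: "sc (a * b) x = sc a (sc b x)" using sc unfolding scalar_action_def by blast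
lemma sc_addl: "sc (a + b) x = sc a x + sc b x" using sc unfolding scalar_action_def by blast
lemma sc_addr: "sc a (x + y) = sc a x + sc a y" using sc unfolding scalar_action_def by blast
lemma sc_norm: "norm (sc a x) = norm a * norm x" using sc unfolding scalar_action_def by blast
lemma sc_real: "sc (of_real r) x = r *\<^sub>R x" using sc unfolding scalar_action_def by blast
lemma sc_zl: "sc 0 x = 0" using sc_real[of 0 x] by simp
lemma sc_zr: "sc a 0 = 0" using sc_norm[of a 0] by simp
lemma sc_diffl: "sc (a - b) x = sc a x - sc b x"
  using sc_addl[of "a - b" b x] by (simp add: algebra_simps)
lemma sc_diffr: "sc a (x - y) = sc a x - sc a y"
  using sc_addr[of a "x - y" y] by (simp add: algebra_simps)
lemma sc_scaleR: "sc a (r *\<^sub>R x) = r *\<^sub>R sc a x"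
  by (metis sc_real sc_mult mult.commute)
lemma sc_comm: "sc a (sc b x) = sc b (sc a x)"
  by (metis sc_mult mult.commute)

lemma opL_D: "P \<in> opL sc \<Longrightarrow> bounded_linear P \<and> (\<forall>a x. P (sc a x) = sc a (P x))"
  unfolding opL_def by blast

lemma opL_comm_line:
  assumes P: "P \<in> opL sc" and Q: "Q \<in> opL sc" and e: "e \<noteq> 0"
    and all: "\<And>w. w \<in> closure (range (\<lambda>z. sc z e))"
  shows "P (Q w) = Q (P w)"
proof -
  have blP: "bounded_linear P" and scP: "\<And>a x. P (sc a x) = sc a (P x)" using opL_D[OF P] by blast+
  have blQ: "bounded_linear Q" and scQ: "\<And>a x. Q (sc a x) = sc a (Q x)" using opL_D[OF Q] by blast+
  have sq: "\<exists>a. (\<lambda>k. sc (a k) e) \<longlonglongrightarrow> w" for w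
  proof -
    obtain f where f: "\<forall>n. f n \<in> range (\<lambda>z. sc z e)" "f \<longlonglongrightarrow> w"
      using all[of w] unfolding closure_sequential by blast
    have "\<forall>n. \<exists>z. f n = sc z e" using f(1) by blast
    hence "\<exists>a. \<forall>n. f n = sc (a n) e" by (rule choice)
    then obtain a where fa: "\<And>n. f n = sc (a n) e" by blast
    have "f = (\<lambda>k. sc (a k) e)" using fa by (simp add: fun_eq_iff)
    thus ?thesis using f(2) by (intro exI[of _ a]) simp
  qed
  have bnd: "\<exists>K. \<forall>k. norm (a k) \<le> K" if "(\<lambda>k. sc (a k) e) \<longlonglongrightarrow> w" for a w
  proof -
    from that have "Bseq (\<lambda>k. sc (a k) e)" by (rule convergent_imp_Bseq[OF convergentI])
    then obtain K where K: "\<And>k. norm (sc (a k) e) \<le> K" unfolding Bseq_def by blast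
    have "norm (a k) \<le> K / norm e" for k using K[of k] e by (simp add: sc_norm field_simps)
    thus ?thesis by blast
  qed
  obtain a where a: "(\<lambda>k. sc (a k) e) \<longlonglongrightarrow> P e" using sq by blast
  obtain b where b: "(\<lambda>k. sc (b k) e) \<longlonglongrightarrow> Q e" using sq by blast
  obtain Ka where Ka: "\<And>k. norm (a k) \<le> Ka" using bnd[OF a] by blast
  obtain Kb where Kb: "\<And>k. norm (b k) \<le> Kb" using bnd[OF b] by blast
  have 1: "(\<lambda>k. sc (a k) (Q e)) \<longlonglongrightarrow> Q (P e)"
    using bounded_linear.tendsto[OF blQ a] by (simp add: scQ)
  have 2: "(\<lambda>k. sc (b k) (P e)) \<longlonglongrightarrow> P (Q e)"
    using bounded_linear.tendsto[OF blP b] by (simp add: scP)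
  have 3: "(\<lambda>k. sc (a k) (Q e) - sc (b k) (P e)) \<longlonglongrightarrow> 0"
  proof (rule Lim_null_comparison)
    have "(\<lambda>k. Q e - sc (b k) e) \<longlonglongrightarrow> Q e - Q e" by (intro tendsto_diff tendsto_const b)
    hence "(\<lambda>k. Q e - sc (b k) e) \<longlonglongrightarrow> 0" by simp
    from tendsto_norm_zero[OF this] have ta: "(\<lambda>k. norm (Q e - sc (b k) e)) \<longlonglongrightarrow> 0" .
    have "(\<lambda>k. P e - sc (a k) e) \<longlonglongrightarrow> P e - P e" by (intro tendsto_diff tendsto_const a)
    hence "(\<lambda>k. P e - sc (a k) e) \<longlonglongrightarrow> 0" by simp
    from tendsto_norm_zero[OF this] have tb: "(\<lambda>k. norm (P e - sc (a k) e)) \<longlonglongrightarrow> 0" .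
    show "(\<lambda>k. Ka * norm (Q e - sc (b k) e) + Kb * norm (P e - sc (a k) e)) \<longlonglongrightarrow> 0"
      using tendsto_add[OF tendsto_mult_right_zero[OF ta, of Ka] tendsto_mult_right_zero[OF tb, of Kb]] by simp
    show "\<forall>\<^sub>F k in sequentially. norm (sc (a k) (Q e) - sc (b k) (P e))
        \<le> Ka * norm (Q e - sc (b k) e) + Kb * norm (P e - sc (a k) e)"
    proof (rule always_eventually, rule allI)
      fix k
      have "sc (a k) (Q e) - sc (b k) (P e) = sc (a k) (Q e - sc (b k) e) - sc (b k) (P e - sc (a k) e)"
        by (simp add: sc_diffr sc_comm)
      hence "norm (sc (a k) (Q e) - sc (b k) (P e)) \<le> norm (sc (a k) (Q e - sc (b k) e)) + norm (sc (b k) (P e - sc (a k) e))"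
        by (metis norm_triangle_ineq4)
      also have "\<dots> \<le> Ka * norm (Q e - sc (b k) e) + Kb * norm (P e - sc (a k) e)"
        unfolding sc_norm by (intro add_mono mult_right_mono Ka Kb) auto
      finally show "norm (sc (a k) (Q e) - sc (b k) (P e))
        \<le> Ka * norm (Q e - sc (b k) e) + Kb * norm (P e - sc (a k) e)" .
    qed
  qed
  have "Q (P e) - P (Q e) = 0" using LIMSEQ_unique[OF tendsto_diff[OF 1 2] 3] .
  hence ePQ: "P (Q e) = Q (P e)" by simp
  obtain c where c: "(\<lambda>k. sc (c k) e) \<longlonglongrightarrow> w" using sq by blast
  have l1: "(\<lambda>k. P (Q (sc (c k) e))) \<longlonglongrightarrow> P (Q w)"
    using bounded_linear.tendsto[OF blP bounded_linear.tendsto[OF blQ c]] .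
  have l2: "(\<lambda>k. Q (P (sc (c k) e))) \<longlonglongrightarrow> Q (P w)"
    using bounded_linear.tendsto[OF blQ bounded_linear.tendsto[OF blP c]] .
  have "P (Q (sc (c k) e)) = Q (P (sc (c k) e))" for k by (simp add: scP scQ ePQ)
  thus ?thesis using LIMSEQ_unique[OF l1] l2 by simp
qed

end


lemma bl_diff: "bounded_linear f \<Longrightarrow> f (x - y) = f x - f y" by (simp add: linear_diff bounded_linear.linear)
lemma bl_add: "bounded_linear f \<Longrightarrow> f (x + y) = f x + f y" by (simp add: linear_add bounded_linear.linear)
lemma bl_scaleR: "bounded_linear f \<Longrightarrow> f (r *\<^sub>R x) = r *\<^sub>R f x" by (simp add: linear_scale bounded_linear.linear)
lemma bl_zero: "bounded_linear f \<Longrightarrow> f 0 = 0" by (simp add: linear_0 bounded_linear.linear)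
lemma bl_minus: "bounded_linear f \<Longrightarrow> f (- x) = - f x" by (simp add: linear_neg bounded_linear.linear)

context
  fixes sc :: "'k::real_normed_field \<Rightarrow> 'a::real_normed_vector \<Rightarrow> 'a"
  assumes sc: "scalar_action sc"
begin

lemma sc_negr: "sc a (- x) = - sc a x"
  using sc_diffr[OF sc, of a 0 x] sc_zr[OF sc, of a] by simp

lemma commutant_D: "S \<in> commutant sc T \<Longrightarrow> S \<in> opL sc \<and> (\<forall>x. T (S x) = S (T x))"
  unfolding commutant_def commutator_def by (auto simp: fun_eq_iff)

lemma core:
  assumes T: "T \<in> opL sc" and Mo: "M \<in> opL sc"
   and TD: "commutator T (commutator T M) = (\<lambda>_. 0)"
   and B: "B \<in> commutant sc T" and C: "C \<in> commutant sc T"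
   and CD: "(\<lambda>x. C (commutator T M x)) \<noteq> (\<lambda>_. 0)"
   and Cv: "C (M u) = B u"
   and wd: "weakly_dense {sc z ((T ^^ n) u) | z n. True}"
  shows False
proof -
  have blT: "bounded_linear T" and scT: "\<And>a x. T (sc a x) = sc a (T x)" using opL_D[OF sc T] by blast+
  have blM: "bounded_linear M" and scM: "\<And>a x. M (sc a x) = sc a (M x)" using opL_D[OF sc Mo] by blast+
  have blB: "bounded_linear B" and scB: "\<And>a x. B (sc a x) = sc a (B x)" and TB: "\<And>x. T (B x) = B (T x)"
    using commutant_D[OF B] opL_D[OF sc] by blast+
  have blC: "bounded_linear C" and scC: "\<And>a x. C (sc a x) = sc a (C x)" and TC: "\<And>x. T (C x) = C (T x)"
    using commutant_D[OF C] opL_D[OF sc] by blast+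
  define D where "D = commutator T M"
  have Dx: "D x = T (M x) - M (T x)" for x unfolding D_def commutator_def by simp
  have TDx: "T (D x) = D (T x)" for x using fun_cong[OF TD, of x] unfolding D_def commutator_def by simp
  have blD: "bounded_linear D" unfolding Dx[abs_def]
    by (intro bounded_linear_sub bounded_linear_compose[OF blT blM] bounded_linear_compose[OF blM blT])
  have scD: "D (sc a x) = sc a (D x)" for a x by (simp add: Dx scT scM sc_diffr[OF sc])
  define L where "L x = C (D x)" for x
  have blL: "bounded_linear L" unfolding L_def by (rule bounded_linear_compose[OF blC blD])
  have scL: "L (sc a x) = sc a (L x)" for a x by (simp add: L_def scD scC)
  have TL: "T (L x) = L (T x)" for x by (simp add: L_def TC TDx)
  obtain y0 where y0: "L y0 \<noteq> 0" using CD unfolding L_def D_def by (auto simp: fun_eq_iff)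
  define x where "x n = (T ^^ n) u" for n
  have xS: "x (Suc n) = T (x n)" for n by (simp add: x_def)
  define a where "a n = C (M (x n)) - B (x n)" for n
  have a0: "a 0 = 0" by (simp add: a_def x_def Cv)
  have aS: "a (Suc n) = T (a n) - L (x n)" for n
  proof -
    have "M (T (x n)) = T (M (x n)) - D (x n)" by (simp add: Dx)
    hence "C (M (T (x n))) = T (C (M (x n))) - L (x n)"
      by (simp add: L_def bl_diff[OF blC] TC)
    thus ?thesis by (simp add: a_def xS TB bl_diff[OF blT])
  qed
  have Ta: "T (a n) = - real n *\<^sub>R L (x n)" for n
  proof (induction n)
    case 0 thus ?case by (simp add: a0 bl_zero[OF blT])
  next
    case (Suc n)
    have "T (a (Suc n)) = T (T (a n)) - T (L (x n))" by (simp add: aS bl_diff[OF blT])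
    also have "\<dots> = - real n *\<^sub>R L (x (Suc n)) - L (x (Suc n))"
      by (simp add: Suc bl_scaleR[OF blT] bl_minus[OF blT] TL xS)
    also have "\<dots> = - real (Suc n) *\<^sub>R L (x (Suc n))" by (simp add: algebra_simps)
    finally show ?case .
  qed
  define A where "A y = T (C (M y) - B y)" for y
  have blA: "bounded_linear A" unfolding A_def
    by (intro bounded_linear_compose[OF blT] bounded_linear_sub bounded_linear_compose[OF blC blM] blB)
  have scA: "A (sc c y) = sc c (A y)" for c y
    by (simp add: A_def scM scC scB sc_diffr[OF sc, symmetric] scT)
  have orb: "A (sc z (x n)) = - real n *\<^sub>R L (sc z (x n))" for z n
  proof -
    have "A (x n) = T (a n)" by (simp add: A_def a_def)
    thus ?thesis by (simp add: scA scL Ta sc_scaleR[OF sc] sc_negr)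
  qed
  obtain \<phi> :: "'a \<Rightarrow> real" where \<phi>: "bounded_linear \<phi>" "\<phi> (L y0) = 1"
    using separate[of "{0}" "L y0"] y0 by auto
  define fL where "fL y = \<phi> (L y)" for y
  define fA where "fA y = \<phi> (A y)" for y
  have blfL: "bounded_linear fL" unfolding fL_def by (rule bounded_linear_compose[OF \<phi>(1) blL])
  have blfA: "bounded_linear fA" unfolding fA_def by (rule bounded_linear_compose[OF \<phi>(1) blA])
  have orbf: "fA (sc z (x n)) = - real n * fL (sc z (x n))" for z n
    by (simp add: fA_def fL_def orb bl_scaleR[OF \<phi>(1)] bl_minus[OF \<phi>(1)])
  define r0 where "r0 = - fA y0"
  define Wp where "Wp y \<longleftrightarrow> fL y > 1/2 \<and> \<bar>fA y + r0 * fL y\<bar> < 1/4" for y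
  have Wy0: "Wp y0" using \<phi>(2) by (simp add: Wp_def fL_def r0_def fA_def)
  have approx: "\<exists>z n. Wp (sc z (x n)) \<and> \<bar>f (sc z (x n)) - f y\<bar> < e"
    if Wy: "Wp y" and blf: "bounded_linear f" and e: "e > 0" for y and f :: "'a \<Rightarrow> real" and e :: real
  proof -
    define e1 where "e1 = fL y - 1/2"
    define e2 where "e2 = 1/4 - \<bar>fA y + r0 * fL y\<bar>"
    have e1: "e1 > 0" and e2: "e2 > 0" using Wy by (auto simp: Wp_def e1_def e2_def)
    define \<delta> where "\<delta> = min e (min e1 (e2/(1+\<bar>r0\<bar>)))"
    have \<delta>: "\<delta> > 0" using e e1 e2 by (simp add: \<delta>_def add_pos_nonneg)
    have "finite {f, fL, fA}" by simp
    moreover have "\<forall>g\<in>{f, fL, fA}. bounded_linear g" using blf blfL blfA by simp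
    ultimately have "\<exists>p\<in>{sc z ((T ^^ n) u) | z n. True}. \<forall>g\<in>{f, fL, fA}. \<bar>g p - g y\<bar> < \<delta>"
      using wd[unfolded weakly_dense_def, rule_format, of "{f, fL, fA}" \<delta> y] \<delta> by blast
    then obtain p where p: "p \<in> {sc z ((T ^^ n) u) | z n. True}" "\<forall>g\<in>{f, fL, fA}. \<bar>g p - g y\<bar> < \<delta>"
      by blast
    then obtain z n where pz: "p = sc z (x n)" unfolding x_def by blast
    have d1: "\<bar>f p - f y\<bar> < \<delta>" "\<bar>fL p - fL y\<bar> < \<delta>" "\<bar>fA p - fA y\<bar> < \<delta>" using p(2) by auto
    have "\<delta> \<le> e2/(1+\<bar>r0\<bar>)" unfolding \<delta>_def by simp
    hence d2: "\<delta> * (1+\<bar>r0\<bar>) \<le> e2" by (simp add: pos_le_divide_eq add_pos_nonneg)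
    have d3: "\<bar>r0\<bar> * \<bar>fL p - fL y\<bar> \<le> \<bar>r0\<bar> * \<delta>" using d1(2) by (simp add: mult_left_mono)
    have "fA p + r0 * fL p = (fA y + r0 * fL y) + (fA p - fA y) + r0 * (fL p - fL y)"
      by (simp add: algebra_simps)
    hence "\<bar>fA p + r0 * fL p\<bar> \<le> \<bar>fA y + r0 * fL y\<bar> + \<bar>fA p - fA y\<bar> + \<bar>r0\<bar> * \<bar>fL p - fL y\<bar>"
      by (simp add: abs_mult[symmetric])
    hence "\<bar>fA p + r0 * fL p\<bar> < 1/4" using d1 d2 d3 unfolding e2_def by (simp add: algebra_simps)
    moreover have "fL p > 1/2" using d1(2) unfolding \<delta>_def e1_def by linarith
    ultimately have "Wp p" unfolding Wp_def by simp
    moreover have "\<bar>f p - f y\<bar> < e" using d1(1) unfolding \<delta>_def by linarith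
    ultimately show ?thesis using pz by blast
  qed
  have idx: "\<bar>real n - r0\<bar> < 1/2" if W: "Wp (sc z (x n))" for z n
  proof (rule ccontr)
    assume "\<not> ?thesis"
    hence h: "\<bar>r0 - real n\<bar> \<ge> 1/2" by linarith
    let ?p = "sc z (x n)"
    have "fA ?p + r0 * fL ?p = (r0 - real n) * fL ?p" by (simp add: orbf algebra_simps)
    hence eq: "\<bar>fA ?p + r0 * fL ?p\<bar> = \<bar>r0 - real n\<bar> * fL ?p" using W by (simp add: Wp_def abs_mult)
    have "1/2 * (1/2) \<le> \<bar>r0 - real n\<bar> * fL ?p" using W h by (intro mult_mono) (auto simp: Wp_def)
    thus False using W eq by (simp add: Wp_def)
  qed
  obtain z0 n0 where p0: "Wp (sc z0 (x n0))"
    using approx[OF Wy0 blfL, of 1] by auto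
  define e where "e = x n0"
  have e0: "e \<noteq> 0"
  proof
    assume "e = 0"
    hence "sc z0 (x n0) = 0" by (simp add: e_def sc_zr[OF sc])
    thus False using p0 by (simp add: Wp_def bl_zero[OF blfL])
  qed
  define LL where "LL = range (\<lambda>z. sc z e)"
  have inl: "sc z (x n) \<in> LL" if W: "Wp (sc z (x n))" for z n
  proof -
    have h1: "\<bar>real n - r0\<bar> < 1/2" using idx[OF W] .
    have h2: "\<bar>real n0 - r0\<bar> < 1/2" using idx[OF p0] .
    have "\<not> n < n0"
    proof
      assume "n < n0" hence "real n + 1 \<le> real n0" by linarith
      thus False using h1 h2 by linarith
    qed
    moreover have "\<not> n0 < n"
    proof
      assume "n0 < n" hence "real n0 + 1 \<le> real n" by linarith
      thus False using h1 h2 by linarith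
    qed
    ultimately have "n = n0" by simp
    thus ?thesis unfolding LL_def e_def by simp
  qed
  have l0: "0 \<in> LL" unfolding LL_def using sc_zl[OF sc] by (metis rangeI)
  have ladd: "p + q \<in> LL" if pq: "p\<in>LL" "q\<in>LL" for p q
  proof -
    obtain a1 a2 where "p = sc a1 e" "q = sc a2 e" using pq unfolding LL_def by blast
    hence "p + q = sc (a1 + a2) e" by (simp add: sc_addl[OF sc])
    thus ?thesis unfolding LL_def by simp
  qed
  have lsm: "r *\<^sub>R p \<in> LL" if pl: "p\<in>LL" for r p
  proof -
    obtain a1 where "p = sc a1 e" using pl unfolding LL_def by blast
    hence "r *\<^sub>R p = sc (of_real r * a1) e" by (simp add: sc_mult[OF sc] sc_real[OF sc])
    thus ?thesis unfolding LL_def by simp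
  qed
  note cs = closure_sub[OF l0 ladd lsm]
  have WV: "y \<in> closure LL" if W: "Wp y" for y
  proof (rule ccontr)
    assume ny: "y \<notin> closure LL"
    obtain f :: "'a \<Rightarrow> real" where f: "bounded_linear f" "\<forall>v\<in>closure LL. f v = 0" "f y = 1"
      using separate[OF closed_closure cs(1) cs(2) cs(3) ny] by blast
    obtain z n where zn: "Wp (sc z (x n))" "\<bar>f (sc z (x n)) - f y\<bar> < 1"
      using approx[OF W f(1), of 1] by auto
    have "sc z (x n) \<in> closure LL" using inl[OF zn(1)] closure_subset by blast
    thus False using f zn(2) by simp
  qed
  have allV: "w \<in> closure LL" for w
  proof -
    define g where "g = fA w + r0 * fL w"
    define K where "K = \<bar>fL w\<bar> + \<bar>g\<bar> + 1"
    have K: "K > 0" unfolding K_def by (simp add: add_pos_nonneg)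
    define t where "t = 1 / (8 * K)"
    have t: "t > 0" unfolding t_def using K by simp
    have tK: "t * K = 1/8" unfolding t_def using K by simp
    have k1: "\<bar>fL w\<bar> \<le> K" and k2: "\<bar>g\<bar> \<le> K" unfolding K_def by auto
    have b1: "\<bar>t * fL w\<bar> \<le> 1/8"
    proof -
      have "t * \<bar>fL w\<bar> \<le> t * K" using k1 t by (intro mult_left_mono) auto
      thus ?thesis using tK t by (simp add: abs_mult)
    qed
    have b2: "\<bar>t * g\<bar> \<le> 1/8"
    proof -
      have "t * \<bar>g\<bar> \<le> t * K" using k2 t by (intro mult_left_mono) auto
      thus ?thesis using tK t by (simp add: abs_mult)
    qed
    have fL0: "fL y0 = 1" using \<phi>(2) fL_def by simp
    have fA0: "fA y0 = - r0" using r0_def by simp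
    have fLy: "fL (y0 + t *\<^sub>R w) = 1 + t * fL w"
      using fL0 by (simp add: bl_add[OF blfL] bl_scaleR[OF blfL])
    have fAy0: "fA (y0 + t *\<^sub>R w) = - r0 + t * fA w"
      using fA0 by (simp add: bl_add[OF blfA] bl_scaleR[OF blfA])
    have fAy: "fA (y0 + t *\<^sub>R w) + r0 * fL (y0 + t *\<^sub>R w) = t * g"
      unfolding fAy0 fLy g_def by (simp add: algebra_simps)
    have "t * fL w \<ge> - (1/8)" using b1 by linarith
    moreover have "\<bar>t * g\<bar> \<le> 1/8" by (rule b2)
    ultimately have "Wp (y0 + t *\<^sub>R w)" unfolding Wp_def using fLy fAy by simp
    hence "y0 + t *\<^sub>R w \<in> closure LL" by (rule WV)
    moreover have "y0 \<in> closure LL" by (rule WV[OF Wy0])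
    ultimately have "(y0 + t *\<^sub>R w) + (-1) *\<^sub>R y0 \<in> closure LL" using cs by blast
    hence "(1/t) *\<^sub>R ((y0 + t *\<^sub>R w) + (-1) *\<^sub>R y0) \<in> closure LL" using cs by blast
    moreover have "(1/t) *\<^sub>R ((y0 + t *\<^sub>R w) + (-1) *\<^sub>R y0) = w" using t by simp
    ultimately show ?thesis by simp
  qed
  have "T (M y) = M (T y)" for y
    using opL_comm_line[OF sc T Mo e0] allV unfolding LL_def by blast
  hence "D y0 = 0" by (simp add: Dx)
  hence "L y0 = 0" by (simp add: L_def bl_zero[OF blC])
  thus False using y0 by simp
qed

end


context
  fixes sc :: "'k::real_normed_field \<Rightarrow> 'a::real_normed_vector \<Rightarrow> 'a"
  assumes sc: "scalar_action sc"
begin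

lemma kspan_0: "0 \<in> kspan sc A"
  unfolding kspan_def by (rule CollectI, rule exI[of _ "{}"]) simp

lemma kspan_add: assumes "x \<in> kspan sc A" "x' \<in> kspan sc A" shows "x + x' \<in> kspan sc A"
proof -
  obtain F1 c1 where 1: "finite F1" "F1 \<subseteq> A" "x = (\<Sum>y\<in>F1. sc (c1 y) y)" using assms(1) unfolding kspan_def by blast
  obtain F2 c2 where 2: "finite F2" "F2 \<subseteq> A" "x' = (\<Sum>y\<in>F2. sc (c2 y) y)" using assms(2) unfolding kspan_def by blast
  define d1 where "d1 y = (if y \<in> F1 then c1 y else 0)" for y
  define d2 where "d2 y = (if y \<in> F2 then c2 y else 0)" for y
  have s1: "(\<Sum>y\<in>F1 \<union> F2. sc (d1 y) y) = x"
    unfolding 1(3) by (rule sum.mono_neutral_cong_right) (use 1 2 in \<open>auto simp: d1_def sc_zl[OF sc]\<close>)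
  have s2: "(\<Sum>y\<in>F1 \<union> F2. sc (d2 y) y) = x'"
    unfolding 2(3) by (rule sum.mono_neutral_cong_right) (use 1 2 in \<open>auto simp: d2_def sc_zl[OF sc]\<close>)
  have "(\<Sum>y\<in>F1 \<union> F2. sc (d1 y + d2 y) y) = (\<Sum>y\<in>F1 \<union> F2. sc (d1 y) y) + (\<Sum>y\<in>F1 \<union> F2. sc (d2 y) y)"
    by (simp add: sc_addl[OF sc] sum.distrib)
  hence eq: "x + x' = (\<Sum>y\<in>F1 \<union> F2. sc (d1 y + d2 y) y)" using s1 s2 by simp
  show ?thesis unfolding kspan_def
    by (rule CollectI, rule exI[of _ "F1 \<union> F2"], rule exI[of _ "\<lambda>y. d1 y + d2 y"]) (use 1 2 eq in simp)
qed

lemma kspan_scale: assumes "x \<in> kspan sc A" shows "r *\<^sub>R x \<in> kspan sc A"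
proof -
  obtain F1 c1 where 1: "finite F1" "F1 \<subseteq> A" "x = (\<Sum>y\<in>F1. sc (c1 y) y)" using assms(1) unfolding kspan_def by blast
  have "r *\<^sub>R x = (\<Sum>y\<in>F1. sc (of_real r * c1 y) y)"
    unfolding 1(3) scaleR_sum_right by (simp add: sc_mult[OF sc] sc_real[OF sc])
  thus ?thesis unfolding kspan_def
    by (intro CollectI exI[of _ F1] exI[of _ "\<lambda>y. of_real r * c1 y"]) (use 1 in simp)
qed

lemma orbit_kspan: "sc z ((T ^^ n) u) \<in> kspan sc (range (\<lambda>n. (T ^^ n) u))"
  unfolding kspan_def
  by (rule CollectI, rule exI[of _ "{(T ^^ n) u}"], rule exI[of _ "\<lambda>_. z"]) auto

lemma wd_cyclic:
  assumes wd: "weakly_dense {sc z ((T ^^ n) u) | z n. True}"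
  shows "cyclic_vector sc T u"
  unfolding cyclic_vector_def
proof (rule ccontr)
  let ?K = "kspan sc (range (\<lambda>n. (T ^^ n) u))"
  assume "closure ?K \<noteq> UNIV"
  then obtain y where ny: "y \<notin> closure ?K" by blast
  note cs = closure_sub[OF kspan_0 kspan_add kspan_scale]
  obtain f :: "'a \<Rightarrow> real" where f: "bounded_linear f" "\<forall>v\<in>closure ?K. f v = 0" "f y = 1"
    using separate[OF closed_closure cs(1) cs(2) cs(3) ny] by blast
  have "\<exists>p\<in>{sc z ((T ^^ n) u) | z n. True}. \<forall>g\<in>{f}. \<bar>g p - g y\<bar> < 1"
    using wd[unfolded weakly_dense_def, rule_format, of "{f}" 1 y] f(1) by simp
  then obtain p where p: "p \<in> {sc z ((T ^^ n) u) | z n. True}" "\<bar>f p - f y\<bar> < 1" by blast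
  from p(1) obtain z n where pz: "p = sc z ((T ^^ n) u)" by blast
  have "p \<in> ?K" unfolding pz by (rule orbit_kspan)
  hence "p \<in> closure ?K" using closure_subset by blast
  thus False using f p(2) by simp
qed

end

theorem theorem1p4:
  fixes sc :: "'k::real_normed_field \<Rightarrow> 'a::banach \<Rightarrow> 'a" and T :: "'a \<Rightarrow> 'a"
  assumes K: "real_or_complex TYPE('k)"
    and sc: "scalar_action sc"
    and T: "T \<in> opL sc"
    and cond1: "\<exists>M \<in> opL sc. commutator T (commutator T M) = (\<lambda>_. 0) \<and>
       (\<forall>u v. cyclic_vector sc T u \<longrightarrow>
          (\<exists>B \<in> commutant sc T. \<exists>C \<in> commutant sc T.
              (\<lambda>x. C (commutator T M x)) \<noteq> (\<lambda>_. 0) \<and> C v = B u))"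
  shows "\<not> supercyclic sc T \<and>
    ((\<exists>R \<in> commutant sc T. closure (range R) = UNIV \<and>
        (\<exists>Y nY. embedded_banach sc Y nY \<and> in_class_Y Y nY \<and> range R \<subseteq> Y))
      \<longrightarrow> \<not> weakly_supercyclic sc T)"
proof -
  obtain M where Mo: "M \<in> opL sc" and TD: "commutator T (commutator T M) = (\<lambda>_. 0)"
    and h: "\<And>u v. cyclic_vector sc T u \<Longrightarrow> (\<exists>B \<in> commutant sc T. \<exists>C \<in> commutant sc T.
              (\<lambda>x. C (commutator T M x)) \<noteq> (\<lambda>_. 0) \<and> C v = B u)"
    using cond1 by blast
  have nwd: False if wd: "weakly_dense {sc z ((T ^^ n) u) | z n. True}" for u
  proof -
    have "cyclic_vector sc T u" using wd_cyclic[OF sc wd] .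
    then obtain B C where B: "B \<in> commutant sc T" and C: "C \<in> commutant sc T"
      and CD: "(\<lambda>x. C (commutator T M x)) \<noteq> (\<lambda>_. 0)" and Cv: "C (M u) = B u"
      using h[of u "M u"] by blast
    show False using core[OF sc T Mo TD B C CD Cv wd] .
  qed
  have "\<not> supercyclic sc T"
  proof
    assume "supercyclic sc T"
    then obtain u where "closure {sc z ((T ^^ n) u) | z n. True} = UNIV" unfolding supercyclic_def by blast
    thus False using nwd dense_weakly_dense by blast
  qed
  moreover have "\<not> weakly_supercyclic sc T"
    using nwd unfolding weakly_supercyclic_def by blast
  ultimately show ?thesis by blast
qed


end
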